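(* If there exists a projective plane of order $s\ge2$ (equivalently a Steiner system $S(2,s+1,s^2+s+1)$), then $q''_0(2,s+1,s^2+s+1)=s^2+1$; that is, the smallest $q$ for which there exists an $(s^2+s+1,\,s^2,\,s^2+s)_q$ code of size $s^2+s+1$ is $s^2+1$.
   Context: $\mathbb{Z}_q=\{0,\dots,q-1\}$ (an alphabet); $\mathrm{wt}$ = number of nonzero coordinates; $d$ = Hamming distance; $J_q(n,w)$ = weight-$w$ words of $\mathbb{Z}_q^n$. An $(n,w,d)_q$ code of size $M$ is a subset $C\subseteq J_q(n,w)$ with $|C|=M$ and pairwise distances at least $d$. A Steiner system $S(t,k,n)$ is a pair $(N,B)$, $|N|=n$, $B$ a set of $k$-subsets (blocks) with every $t$-subset in exactly one block. For $t,k,n$ such that an $S(t,k,n)$ exists, $q''_0(t,k,n)$ is the smallest $q$ for which an $(n,n-k,n-t+1)_q$ code of size $\binom{n}{t}/\binom{k}{t}$ exists. *)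

theory Defs
  imports Main
begin

text \<open>Words of length n over Z_q = {0..q-1}, represented as functions nat => nat
  supported on {0..<n}.\<close>
definition words :: "nat \<Rightarrow> nat \<Rightarrow> (nat \<Rightarrow> nat) set" where
  "words q n = {x. (\<forall>i<n. x i < q) \<and> (\<forall>i\<ge>n. x i = 0)}"

definition wt :: "nat \<Rightarrow> (nat \<Rightarrow> nat) \<Rightarrow> nat" where
  "wt n x = card {i. i < n \<and> x i \<noteq> 0}"

definition hdist :: "nat \<Rightarrow> (nat \<Rightarrow> nat) \<Rightarrow> (nat \<Rightarrow> nat) \<Rightarrow> nat" where
  "hdist n x y = card {i. i < n \<and> x i \<noteq> y i}"

definition is_code :: "nat \<Rightarrow> nat \<Rightarrow> nat \<Rightarrow> nat \<Rightarrow> nat \<Rightarrow> (nat \<Rightarrow> nat) set \<Rightarrow> bool" where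
  "is_code q n w d M C \<longleftrightarrow>
     C \<subseteq> words q n \<and> (\<forall>x\<in>C. wt n x = w) \<and> finite C \<and> card C = M \<and>
     (\<forall>x\<in>C. \<forall>y\<in>C. x \<noteq> y \<longrightarrow> hdist n x y \<ge> d)"

definition steiner_system :: "nat \<Rightarrow> nat \<Rightarrow> nat \<Rightarrow> 'a set \<Rightarrow> 'a set set \<Rightarrow> bool" where
  "steiner_system t k n N B \<longleftrightarrow>
     finite N \<and> card N = n \<and>
     (\<forall>b\<in>B. b \<subseteq> N \<and> card b = k) \<and>
     (\<forall>T. T \<subseteq> N \<and> card T = t \<longrightarrow> (\<exists>!b. b \<in> B \<and> T \<subseteq> b))"

definition q0'' :: "nat \<Rightarrow> nat \<Rightarrow> nat \<Rightarrow> nat" where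
  "q0'' t k n = (LEAST q. \<exists>C. is_code q n (n - k) (n - t + 1) ((n choose t) div (k choose t)) C)"

end

theory Submission
  imports Defs
begin


lemma card_split_lt: "card {i. i < n \<and> P i} + card {i. i < n \<and> \<not> P i} = n"
proof -
  have "{i. i < n \<and> P i} \<union> {i. i < n \<and> \<not> P i} = {..<n}" by auto
  moreover have "{i. i < n \<and> P i} \<inter> {i. i < n \<and> \<not> P i} = {}" by auto
  moreover have "finite {i. i < n \<and> P i}" "finite {i. i < n \<and> \<not> P i}" by auto
  ultimately have "card {..<n} = card {i. i < n \<and> P i} + card {i. i < n \<and> \<not> P i}"
    using card_Un_disjoint by metis
  then show ?thesis by simp
qed

lemma card_offdiag:
  assumes "finite Z"
  shows "card (Sigma Z (\<lambda>x. Z - {x})) = card Z * (card Z - 1)"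
  using assms by (simp add: card_SigmaI)

lemma arith_step:
  fixes z s P :: nat
  assumes "z * (z - 1) + (if z = s + 1 then 2 else 0) \<le> P"
  shows "s*(s+1) + (2*s+1)*z + 1 \<le> P + (2*s+1)*(s+1)"
proof (cases "z = s + 1")
  case True then show ?thesis using assms by (simp add: algebra_simps)
next
  case False
  have h: "int (z*(z-1)) = int z * int z - int z" by (cases z) (auto simp: algebra_simps)
  have sq: "(int z - int s - 1)^2 = int z*int z - int z + (2*int s+1)*(int s+1) - int s*(int s+1) - (2*int s+1)*int z"
    by algebra
  have ne: "int z - int s - 1 \<noteq> 0" using False by simp
  have "(int z - int s - 1)^2 \<ge> 1"
  proof -
    have "\<bar>int z - int s - 1\<bar> \<ge> 1" using ne by linarith
    then have "\<bar>int z - int s - 1\<bar>*\<bar>int z - int s - 1\<bar> \<ge> 1"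
      by (metis mult_mono' mult_1_left abs_ge_zero order_trans zero_le_one)
    then show ?thesis by (simp add: power2_eq_square)
  qed
  have "z*(z-1) \<le> P" using assms False by simp
  then have "int (z*(z-1)) \<le> int P" by (simp only: of_nat_le_iff)
  then have "int s*(int s+1) + (2*int s+1)*int z + 1 \<le> int P + (2*int s+1)*(int s+1)"
    using h sq \<open>(int z - int s - 1)^2 \<ge> 1\<close> by linarith
  then have "int (s*(s+1) + (2*s+1)*z + 1) \<le> int (P + (2*s+1)*(s+1))"
    by (simp only: of_nat_add of_nat_mult of_nat_1 of_nat_numeral)
  then show ?thesis by (simp only: of_nat_le_iff)
qed



lemma card_filter_sum:
  assumes "finite A"
  shows "card {x\<in>A. Q x} = (\<Sum>x\<in>A. (if Q x then 1 else 0::nat))"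
  using assms
proof (induction A rule: finite_induct)
  case empty then show ?case by simp
next
  case (insert a A)
  have "{x\<in>insert a A. Q x} = (if Q a then insert a {x\<in>A. Q x} else {x\<in>A. Q x})" by auto
  then show ?case using insert by auto
qed

lemma card_lt_sum: "card {i. i < (n::nat) \<and> Q i} = (\<Sum>i<n. (if Q i then 1 else 0::nat))"
proof -
  have "{i. i < n \<and> Q i} = {i\<in>{..<n}. Q i}" by auto
  moreover have "card {i\<in>{..<n}. Q i} = (\<Sum>i<n. (if Q i then 1 else 0::nat))"
    by (rule card_filter_sum) simp
  ultimately show ?thesis by simp
qed

lemma lower_bound:
  fixes s q n :: nat and C
  assumes s1: "s \<ge> 1" and nd: "n = s^2 + s + 1"
    and code: "is_code q n (s^2) (s^2 + s) n C"
  shows "s^2 + 1 \<le> q"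
proof (rule ccontr)
  assume "\<not> s^2 + 1 \<le> q"
  then have qs: "q \<le> s^2" by simp
  have CW: "C \<subseteq> words q n" and wtC: "\<And>x. x \<in> C \<Longrightarrow> wt n x = s^2" and fC: "finite C"
    and cC: "card C = n" and dist: "\<And>x y. x \<in> C \<Longrightarrow> y \<in> C \<Longrightarrow> x \<noteq> y \<Longrightarrow> hdist n x y \<ge> s^2 + s"
    using code unfolding is_code_def by auto
  define Z where "Z i = {x\<in>C. x i = 0}" for i
  define P where "P i = {(x,y)\<in>C\<times>C. x \<noteq> y \<and> x i = y i}" for i
  have fZ: "finite (Z i)" for i using fC unfolding Z_def by simp
  have fP: "finite (P i)" for i
  proof -
    have "P i \<subseteq> C \<times> C" unfolding P_def by auto
    then show ?thesis using fC finite_subset by blast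
  qed
  have agree: "card {i. i < n \<and> x i = y i} \<le> 1" if "x \<in> C" "y \<in> C" "x \<noteq> y" for x y
  proof -
    have "card {i. i < n \<and> x i = y i} + card {i. i < n \<and> \<not> x i = y i} = n" by (rule card_split_lt)
    moreover have "hdist n x y \<ge> s^2 + s" using dist that by blast
    ultimately show ?thesis unfolding hdist_def using nd by simp
  qed
  have sumP: "(\<Sum>i<n. card (P i)) \<le> n * (n - 1)"
  proof -
    have "(\<Sum>i<n. card (P i)) = (\<Sum>i<n. \<Sum>x\<in>C. \<Sum>y\<in>C. (if x \<noteq> y \<and> x i = y i then 1 else 0::nat))"
    proof (rule sum.cong[OF refl])
      fix i
      have "P i = Sigma C (\<lambda>x. {y\<in>C. x \<noteq> y \<and> x i = y i})" unfolding P_def by auto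
      then have "card (P i) = (\<Sum>x\<in>C. card {y\<in>C. x \<noteq> y \<and> x i = y i})"
        using fC by (simp add: card_SigmaI)
      also have "\<dots> = (\<Sum>x\<in>C. \<Sum>y\<in>C. (if x \<noteq> y \<and> x i = y i then 1 else 0::nat))"
        by (rule sum.cong[OF refl], rule card_filter_sum[OF fC])
      finally show "card (P i) = \<dots>" .
    qed
    also have "\<dots> = (\<Sum>x\<in>C. \<Sum>y\<in>C. \<Sum>i<n. (if x \<noteq> y \<and> x i = y i then 1 else 0::nat))"
    proof -
      have "(\<Sum>i<n. \<Sum>x\<in>C. \<Sum>y\<in>C. (if x \<noteq> y \<and> x i = y i then 1 else 0::nat))
          = (\<Sum>x\<in>C. \<Sum>i<n. \<Sum>y\<in>C. (if x \<noteq> y \<and> x i = y i then 1 else 0::nat))"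
        by (rule sum.swap)
      also have "\<dots> = (\<Sum>x\<in>C. \<Sum>y\<in>C. \<Sum>i<n. (if x \<noteq> y \<and> x i = y i then 1 else 0::nat))"
        by (rule sum.cong[OF refl], rule sum.swap)
      finally show ?thesis .
    qed
    also have "\<dots> \<le> (\<Sum>x\<in>C. \<Sum>y\<in>C. (if x \<noteq> y then 1 else 0::nat))"
    proof (intro sum_mono)
      fix x y assume xy: "x \<in> C" "y \<in> C"
      show "(\<Sum>i<n. (if x \<noteq> y \<and> x i = y i then 1 else 0::nat)) \<le> (if x \<noteq> y then 1 else 0)"
      proof (cases "x = y")
        case True then show ?thesis by simp
      next
        case False
        have "(\<Sum>i<n. (if x \<noteq> y \<and> x i = y i then 1 else 0::nat)) = card {i. i < n \<and> x i = y i}"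
          using False card_lt_sum[of n "\<lambda>i. x i = y i"] by simp
        then show ?thesis using agree[OF xy False] False by simp
      qed
    qed
    also have "\<dots> = (\<Sum>x\<in>C. n - 1)"
    proof (rule sum.cong[OF refl])
      fix x assume x: "x \<in> C"
      have "(\<Sum>y\<in>C. (if x \<noteq> y then 1 else 0::nat)) = card (C - {x})"
      proof -
        have "C - {x} = {y\<in>C. x \<noteq> y}" by auto
        then show ?thesis using card_filter_sum[OF fC, of "\<lambda>y. x \<noteq> y"] by simp
      qed
      also have "\<dots> = n - 1" using x fC cC by simp
      finally show "(\<Sum>y\<in>C. (if x \<noteq> y then 1 else 0::nat)) = n - 1" .
    qed
    also have "\<dots> = n * (n - 1)" using cC by simp
    finally show ?thesis .
  qed
  have sumZ: "(\<Sum>i<n. card (Z i)) = n * (s + 1)"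
  proof -
    have "(\<Sum>i<n. card (Z i)) = (\<Sum>i<n. \<Sum>x\<in>C. (if x i = 0 then 1 else 0::nat))"
      unfolding Z_def by (rule sum.cong[OF refl], rule card_filter_sum[OF fC])
    also have "\<dots> = (\<Sum>x\<in>C. \<Sum>i<n. (if x i = 0 then 1 else 0::nat))" by (rule sum.swap)
    also have "\<dots> = (\<Sum>x\<in>C. s + 1)"
    proof (rule sum.cong[OF refl])
      fix x assume x: "x \<in> C"
      have "(\<Sum>i<n. (if x i = 0 then 1 else 0::nat)) = card {i. i < n \<and> x i = 0}"
        by (rule card_lt_sum[symmetric])
      moreover have "card {i. i < n \<and> x i = 0} + card {i. i < n \<and> \<not> x i = 0} = n" by (rule card_split_lt)
      moreover have "card {i. i < n \<and> x i \<noteq> 0} = s^2" using wtC[OF x] unfolding wt_def .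
      ultimately show "(\<Sum>i<n. (if x i = 0 then 1 else 0::nat)) = s + 1" using nd by simp
    qed
    also have "\<dots> = n * (s + 1)" using cC by simp
    finally show ?thesis .
  qed
  have percoord: "card (Z i) * (card (Z i) - 1) + (if card (Z i) = s + 1 then 2 else 0) \<le> card (P i)"
    if i: "i < n" for i
  proof -
    have sub1: "Sigma (Z i) (\<lambda>x. Z i - {x}) \<subseteq> P i" unfolding Z_def P_def by auto
    show ?thesis
    proof (cases "card (Z i) = s + 1")
      case False
      then show ?thesis using card_mono[OF fP sub1] card_offdiag[OF fZ] by simp
    next
      case True
      define S where "S = C - Z i"
      have ZC: "Z i \<subseteq> C" unfolding Z_def by auto
      have cS: "card S = s^2" unfolding S_def using card_Diff_subset[OF fZ ZC] cC True nd by simp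
      have Sv: "(\<lambda>x. x i) ` S \<subseteq> {1..<q}"
      proof
        fix v assume "v \<in> (\<lambda>x. x i) ` S"
        then obtain x where x: "x \<in> S" "v = x i" by auto
        then have "x \<in> words q n" using CW unfolding S_def by auto
        then have "x i < q" using i unfolding words_def by auto
        moreover have "x i \<noteq> 0" using x unfolding S_def Z_def by auto
        ultimately show "v \<in> {1..<q}" using x by auto
      qed
      have "\<not> inj_on (\<lambda>x. x i) S"
      proof
        assume "inj_on (\<lambda>x. x i) S"
        then have "card S \<le> card {1..<q}" using card_inj_on_le[OF _ Sv] by simp
        then have "s^2 \<le> q - 1" using cS by simp
        moreover have "s^2 \<ge> 1" using s1 by simp
        ultimately show False using qs by linarith
      qed
      then obtain x y where xy: "x \<in> S" "y \<in> S" "x \<noteq> y" "x i = y i" unfolding inj_on_def by auto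
      have xyP: "(x,y) \<in> P i" "(y,x) \<in> P i" using xy unfolding S_def P_def by auto
      have notin: "(x,y) \<notin> Sigma (Z i) (\<lambda>x. Z i - {x})" "(y,x) \<notin> Sigma (Z i) (\<lambda>x. Z i - {x})"
        using xy unfolding S_def by auto
      have sub2: "insert (x,y) (insert (y,x) (Sigma (Z i) (\<lambda>x. Z i - {x}))) \<subseteq> P i"
        using sub1 xyP by auto
      have "card (insert (x,y) (insert (y,x) (Sigma (Z i) (\<lambda>x. Z i - {x})))) = card (Z i) * (card (Z i) - 1) + 2"
        using notin xy(3) card_offdiag[OF fZ] fZ by simp
      then show ?thesis using card_mono[OF fP sub2] True by simp
    qed
  qed
  have "(\<Sum>i<n. s*(s+1) + (2*s+1)*card (Z i) + 1) \<le> (\<Sum>i<n. card (P i) + (2*s+1)*(s+1))"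
    by (rule sum_mono) (rule arith_step[OF percoord], simp)
  moreover have "(\<Sum>i<n. s*(s+1) + (2*s+1)*card (Z i) + 1) = n*(s*(s+1)) + (2*s+1)*(\<Sum>i<n. card (Z i)) + n"
    unfolding sum.distrib sum_distrib_left[symmetric] by (simp add: algebra_simps)
  moreover have "(\<Sum>i<n. card (P i) + (2*s+1)*(s+1)) = (\<Sum>i<n. card (P i)) + n*((2*s+1)*(s+1))"
    unfolding sum.distrib by simp
  ultimately have "n*(s*(s+1)) + (2*s+1)*(\<Sum>i<n. card (Z i)) + n \<le> (\<Sum>i<n. card (P i)) + n*((2*s+1)*(s+1))"
    by simp
  then have "n*(s*(s+1)) + (2*s+1)*(n*(s+1)) + n \<le> (\<Sum>i<n. card (P i)) + n*((2*s+1)*(s+1))"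
    by (simp only: sumZ)
  then have "n*(s*(s+1)) + (2*s+1)*(n*(s+1)) + n \<le> n * (n - 1) + n*((2*s+1)*(s+1))"
    using sumP by linarith
  moreover have "n * (n - 1) = n * (s*(s+1))" using nd by (simp add: power2_eq_square algebra_simps)
  moreover have "(2*s+1)*(n*(s+1)) = n*((2*s+1)*(s+1))" by (simp add: algebra_simps)
  moreover have "n \<ge> 1" using nd by simp
  ultimately show False by linarith
qed



lemma steiner_facts:
  fixes N :: "'a set" and s n :: nat
  assumes st: "steiner_system 2 (s + 1) n N B" and s1: "s \<ge> 1" and nd: "n = s^2 + s + 1"
  shows "finite B" "card B = n"
    "\<And>b c. b \<in> B \<Longrightarrow> c \<in> B \<Longrightarrow> b \<noteq> c \<Longrightarrow> card (b \<inter> c) \<le> 1"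
    "\<And>p. p \<in> N \<Longrightarrow> card {b\<in>B. p \<notin> b} \<le> s^2"
proof -
  have fN: "finite N" and cN: "card N = n" and Bb: "\<And>b. b \<in> B \<Longrightarrow> b \<subseteq> N \<and> card b = s + 1"
    and uniq: "\<And>T. T \<subseteq> N \<Longrightarrow> card T = 2 \<Longrightarrow> \<exists>!b. b \<in> B \<and> T \<subseteq> b"
    using st unfolding steiner_system_def by auto
  show fB: "finite B"
  proof -
    have "B \<subseteq> Pow N" using Bb by auto
    then show ?thesis using fN finite_subset by blast
  qed
  have fb: "finite b" if "b \<in> B" for b using Bb[OF that] fN finite_subset by blast
  show inter: "card (b \<inter> c) \<le> 1" if bc: "b \<in> B" "c \<in> B" "b \<noteq> c" for b c
  proof (rule ccontr)
    assume "\<not> card (b \<inter> c) \<le> 1"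
    then have "\<not> card (b \<inter> c) \<le> Suc 0" by simp
    then obtain x y where xy: "x \<in> b \<inter> c" "y \<in> b \<inter> c" "x \<noteq> y"
      using card_le_Suc0_iff_eq[of "b \<inter> c"] fb[OF bc(1)] by blast
    have "{x,y} \<subseteq> N" using xy Bb[OF bc(1)] by auto
    moreover have "card {x,y} = 2" using xy by simp
    ultimately have "\<exists>!b. b \<in> B \<and> {x,y} \<subseteq> b" by (rule uniq)
    moreover have "{x,y} \<subseteq> b" "{x,y} \<subseteq> c" using xy by auto
    ultimately show False using bc by blast
  qed
  define Pr where "Pr A = {T. T \<subseteq> A \<and> card T = 2}" for A :: "'a set"
  have un: "Pr N = (\<Union>b\<in>B. Pr b)"
  proof
    show "Pr N \<subseteq> (\<Union>b\<in>B. Pr b)"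
    proof
      fix T assume "T \<in> Pr N"
      then have "T \<subseteq> N" "card T = 2" unfolding Pr_def by auto
      then obtain b where "b \<in> B" "T \<subseteq> b" using uniq by blast
      then show "T \<in> (\<Union>b\<in>B. Pr b)" using \<open>card T = 2\<close> unfolding Pr_def by auto
    qed
    show "(\<Union>b\<in>B. Pr b) \<subseteq> Pr N" unfolding Pr_def using Bb by auto
  qed
  have "card (Pr N) = (\<Sum>b\<in>B. card (Pr b))"
    unfolding un
  proof (rule card_UN_disjoint[OF fB])
    show "\<forall>b\<in>B. finite (Pr b)" unfolding Pr_def using fb by simp
    show "\<forall>b\<in>B. \<forall>c\<in>B. b \<noteq> c \<longrightarrow> Pr b \<inter> Pr c = {}"
    proof (intro ballI impI)
      fix b c assume bc: "b \<in> B" "c \<in> B" "b \<noteq> c"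
      show "Pr b \<inter> Pr c = {}"
      proof (rule ccontr)
        assume "Pr b \<inter> Pr c \<noteq> {}"
        then obtain T where "T \<subseteq> b \<inter> c" "card T = 2" unfolding Pr_def by auto
        then have "2 \<le> card (b \<inter> c)" using card_mono fb bc by (metis finite_Int)
        then show False using inter[OF bc] by simp
      qed
    qed
  qed
  also have "\<dots> = card B * ((s+1) choose 2)"
    using Bb fb unfolding Pr_def by (simp add: n_subsets)
  finally have e1: "n choose 2 = card B * ((s+1) choose 2)"
    unfolding Pr_def using n_subsets[OF fN] cN by simp
  have ev: "even ((s+1)*s)" by simp
  have c2: "2 * ((s+1) choose 2) = (s+1)*s" using ev by (simp add: choose_two)
  have ev2: "even (n*(n-1))" by (cases "even n") auto
  have n1: "n - 1 = s*(s+1)" using nd by (simp add: power2_eq_square algebra_simps)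
  have "2 * (n choose 2) = n*(n-1)" using ev2 by (simp add: choose_two)
  also have "\<dots> = n * (2 * ((s+1) choose 2))" using c2 n1 by (simp add: algebra_simps)
  finally have "n choose 2 = n * ((s+1) choose 2)" by simp
  moreover have "(s+1) choose 2 > 0" using s1 by simp
  ultimately show cB: "card B = n" using e1 by simp
  show "card {b\<in>B. p \<notin> b} \<le> s^2" if p: "p \<in> N" for p
  proof -
    define Bp where "Bp = {b\<in>B. p \<in> b}"
    have fBp: "finite Bp" unfolding Bp_def using fB by simp
    have "N - {p} \<subseteq> (\<Union>b\<in>Bp. b - {p})"
    proof
      fix x assume x: "x \<in> N - {p}"
      then have "{p,x} \<subseteq> N" "card {p,x} = 2" using p by auto
      then obtain b where "b \<in> B" "{p,x} \<subseteq> b" using uniq by blast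
      then show "x \<in> (\<Union>b\<in>Bp. b - {p})" using x unfolding Bp_def by auto
    qed
    then have "card (N - {p}) \<le> card (\<Union>b\<in>Bp. b - {p})"
      by (rule card_mono[rotated]) (use fBp fb Bp_def in auto)
    also have "\<dots> \<le> (\<Sum>b\<in>Bp. card (b - {p}))" by (rule card_UN_le[OF fBp])
    also have "\<dots> = (\<Sum>b\<in>Bp. s)"
      by (rule sum.cong[OF refl]) (use Bb fb in \<open>auto simp: Bp_def\<close>)
    also have "\<dots> = card Bp * s" by simp
    finally have "s*(s+1) \<le> card Bp * s" using cN fN p n1 by simp
    then have "s*(s+1) \<le> s*card Bp" by (simp add: mult.commute)
    then have "s+1 \<le> card Bp" using s1 by (simp only: mult_le_cancel1)
    moreover have "{b\<in>B. p \<notin> b} = B - Bp" unfolding Bp_def by auto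
    moreover have "card (B - Bp) = card B - card Bp"
      by (rule card_Diff_subset[OF fBp]) (auto simp: Bp_def)
    ultimately show ?thesis using cB nd by simp
  qed
qed



lemma construction:
  fixes N :: "nat set" and s n :: nat
  assumes st: "steiner_system 2 (s + 1) n N B" and s1: "s \<ge> 1" and nd: "n = s^2 + s + 1"
  shows "\<exists>C. is_code (s^2+1) n (s^2) (s^2 + s) n C"
proof -
  have fN: "finite N" and cN: "card N = n" and Bb: "\<And>b. b \<in> B \<Longrightarrow> b \<subseteq> N \<and> card b = s + 1"
    using st unfolding steiner_system_def by auto
  note SF = steiner_facts[OF st s1 nd]
  have fb: "finite b" if "b \<in> B" for b using Bb[OF that] fN finite_subset by blast
  obtain g where g: "bij_betw g {0..<n} N" using ex_bij_betw_nat_finite[OF fN] cN by auto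
  have ginj: "inj_on g {0..<n}" and gim: "g ` {0..<n} = N" using g unfolding bij_betw_def by auto
  have "\<forall>p\<in>N. \<exists>f. inj_on f {b\<in>B. p \<notin> b} \<and> f ` {b\<in>B. p \<notin> b} \<subseteq> {1..s^2}"
  proof
    fix p assume p: "p \<in> N"
    have fin: "finite {b\<in>B. p \<notin> b}" using SF(1) by simp
    obtain h where h: "bij_betw h {b\<in>B. p \<notin> b} {0..<card {b\<in>B. p \<notin> b}}"
      using ex_bij_betw_finite_nat[OF fin] by auto
    have "inj_on (\<lambda>b. h b + 1) {b\<in>B. p \<notin> b}"
      using h unfolding bij_betw_def inj_on_def by auto
    moreover have "(\<lambda>b. h b + 1) ` {b\<in>B. p \<notin> b} \<subseteq> {1..s^2}"
    proof (rule image_subsetI)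
      fix b assume "b \<in> {b\<in>B. p \<notin> b}"
      then have "h b \<in> {0..<card {b\<in>B. p \<notin> b}}" using h unfolding bij_betw_def by blast
      then show "h b + 1 \<in> {1..s^2}" using SF(4)[OF p] by simp
    qed
    ultimately show "\<exists>f. inj_on f {b\<in>B. p \<notin> b} \<and> f ` {b\<in>B. p \<notin> b} \<subseteq> {1..s^2}" by blast
  qed
  then obtain F where F: "\<And>p. p \<in> N \<Longrightarrow> inj_on (F p) {b\<in>B. p \<notin> b} \<and> F p ` {b\<in>B. p \<notin> b} \<subseteq> {1..s^2}"
    by metis
  define w where "w b = (\<lambda>i. if i < n \<and> g i \<notin> b then F (g i) b else 0)" for b
  have gN: "i < n \<Longrightarrow> g i \<in> N" for i using gim by auto
  have Fr: "b \<in> B \<Longrightarrow> i < n \<Longrightarrow> g i \<notin> b \<Longrightarrow> F (g i) b \<in> {1..s^2}" for b i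
    using F[OF gN] by blast
  have wW: "w b \<in> words (s^2+1) n" if b: "b \<in> B" for b
    unfolding words_def w_def using Fr[OF b] by fastforce
  have nz: "{i. i < n \<and> w b i \<noteq> 0} = {i. i < n \<and> g i \<notin> b}" if b: "b \<in> B" for b
    unfolding w_def using Fr[OF b] by fastforce
  have cimg: "card {i. i < n \<and> P (g i)} = card {x\<in>N. P x}" for P
  proof -
    have "g ` {i. i < n \<and> P (g i)} = {x\<in>N. P x}" using gim by auto
    moreover have "inj_on g {i. i < n \<and> P (g i)}" by (rule inj_on_subset[OF ginj]) auto
    ultimately show ?thesis using card_image by metis
  qed
  have wt: "wt n (w b) = s^2" if b: "b \<in> B" for b
  proof -
    have "wt n (w b) = card {x\<in>N. x \<notin> b}" unfolding wt_def nz[OF b] by (rule cimg)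
    also have "{x\<in>N. x \<notin> b} = N - b" by auto
    also have "card (N - b) = n - (s+1)" using card_Diff_subset[OF fb[OF b]] Bb[OF b] cN by simp
    finally show ?thesis using nd by simp
  qed
  have hd: "hdist n (w b) (w c) \<ge> s^2 + s" if bc: "b \<in> B" "c \<in> B" "b \<noteq> c" for b c
  proof -
    have "{i. i < n \<and> w b i = w c i} \<subseteq> {i. i < n \<and> g i \<in> b \<inter> c}"
    proof safe
      fix i assume i: "i < n" and eq: "w b i = w c i"
      show "g i \<in> b"
      proof (rule ccontr)
        assume nb: "g i \<notin> b"
        then have "w b i \<noteq> 0" "w b i = F (g i) b" using Fr[OF bc(1) i nb] i unfolding w_def by auto
        then have nc: "g i \<notin> c" and eq2: "F (g i) b = F (g i) c" using eq i unfolding w_def by (auto split: if_splits)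
        have "inj_on (F (g i)) {b\<in>B. g i \<notin> b}" using F[OF gN[OF i]] by blast
        then show False using eq2 nb nc bc unfolding inj_on_def by blast
      qed
      show "g i \<in> c"
      proof (rule ccontr)
        assume nc: "g i \<notin> c"
        then have "w c i \<noteq> 0" "w c i = F (g i) c" using Fr[OF bc(2) i nc] i unfolding w_def by auto
        then have nb: "g i \<notin> b" and eq2: "F (g i) b = F (g i) c" using eq i unfolding w_def by (auto split: if_splits)
        have "inj_on (F (g i)) {b\<in>B. g i \<notin> b}" using F[OF gN[OF i]] by blast
        then show False using eq2 nb nc bc unfolding inj_on_def by blast
      qed
    qed
    then have "card {i. i < n \<and> w b i = w c i} \<le> card {i. i < n \<and> g i \<in> b \<inter> c}"
      by (rule card_mono[rotated]) simp
    also have "\<dots> = card {x\<in>N. x \<in> b \<inter> c}" by (rule cimg)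
    also have "{x\<in>N. x \<in> b \<inter> c} = b \<inter> c" using Bb[OF bc(1)] by auto
    also have "card (b \<inter> c) \<le> 1" by (rule SF(3)[OF bc])
    finally have le1: "card {i. i < n \<and> w b i = w c i} \<le> 1" .
    have "card {i. i < n \<and> w b i = w c i} + card {i. i < n \<and> \<not> w b i = w c i} = n" by (rule card_split_lt)
    then show ?thesis unfolding hdist_def using le1 nd by simp
  qed
  have inj: "inj_on w B"
  proof (rule inj_onI, rule ccontr)
    fix b c assume bc: "b \<in> B" "c \<in> B" "w b = w c" "b \<noteq> c"
    have "hdist n (w b) (w c) = 0" unfolding hdist_def bc(3) by simp
    then show False using hd[OF bc(1,2,4)] s1 by simp
  qed
  have "is_code (s^2+1) n (s^2) (s^2 + s) n (w ` B)"
    unfolding is_code_def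
  proof (intro conjI ballI impI)
    show "w ` B \<subseteq> words (s^2+1) n" using wW by auto
    show "finite (w ` B)" using SF(1) by simp
    show "card (w ` B) = n" using card_image[OF inj] SF(2) by simp
  next
    fix x assume "x \<in> w ` B" then show "wt n x = s^2" using wt by auto
  next
    fix x y assume "x \<in> w ` B" "y \<in> w ` B" "x \<noteq> y"
    then show "s^2 + s \<le> hdist n x y" using hd by auto
  qed
  then show ?thesis by blast
qed

theorem mainTheorem19:
  fixes s :: nat
  assumes "s \<ge> 2"
    and "\<exists>(N :: nat set) B. steiner_system 2 (s + 1) (s^2 + s + 1) N B"
  shows "q0'' 2 (s + 1) (s^2 + s + 1) = s^2 + 1"
proof -
  define n where "n = s^2 + s + 1"
  have s1: "s \<ge> 1" using assms(1) by simp
  obtain N :: "nat set" and B where st: "steiner_system 2 (s + 1) n N B" using assms(2) n_def by auto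
  have cB: "card B = n" using steiner_facts(2)[OF st s1 n_def] .
  have ev: "even ((s+1)*s)" by simp
  have c2: "2 * ((s+1) choose 2) = (s+1)*s" using ev by (simp add: choose_two)
  have ev2: "even (n*(n-1))" by (cases "even n") auto
  have n1: "n - 1 = s*(s+1)" using n_def by (simp add: power2_eq_square algebra_simps)
  have "2 * (n choose 2) = n*(n-1)" using ev2 by (simp add: choose_two)
  also have "\<dots> = n * (2 * ((s+1) choose 2))" using c2 n1 by (simp add: algebra_simps)
  finally have "n choose 2 = n * ((s+1) choose 2)" by simp
  moreover have "(s+1) choose 2 > 0" using s1 by simp
  ultimately have M: "(n choose 2) div ((s+1) choose 2) = n" by simp
  have W: "n - (s+1) = s^2" and D: "n - 2 + 1 = s^2 + s" using n_def s1 by auto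
  show ?thesis
    unfolding q0''_def n_def[symmetric] M W D
  proof (rule Least_equality)
    show "\<exists>C. is_code (s\<^sup>2 + 1) n (s\<^sup>2) (s\<^sup>2 + s) n C" by (rule construction[OF st s1 n_def])
  next
    fix q assume "\<exists>C. is_code q n (s\<^sup>2) (s\<^sup>2 + s) n C"
    then obtain C where "is_code q n (s\<^sup>2) (s\<^sup>2 + s) n C" by blast
    then show "s\<^sup>2 + 1 \<le> q" by (rule lower_bound[OF s1 n_def])
  qed
qed

end
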